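(* Let $p\in[2,\infty)$. There is a constant $C_p$ such that for all $n,d$ and every real-valued $f:\Omega_n\to\mathbb{R}$ of degree at most $d$, $$\big\||\nabla f|\big\|_{L^p(\Omega_n)}\le C_p\,d\,\|f\|_{L^p(\Omega_n)}.$$
   Context: $\Omega_n=\{-1,1\}^n$ with uniform probability measure. $f$ has degree at most $d$ if $f=\sum_{|S|\le d}\hat f(S)\varepsilon^S$ with $\varepsilon^S=\prod_{i\in S}\varepsilon_i$. $D_jf(\varepsilon)=\frac{f(\varepsilon)-f(\varepsilon^{(j)})}{2}$ with $\varepsilon^{(j)}$ the point $\varepsilon$ with $j$-th coordinate flipped, and $|\nabla f|=\big(\sum_{j=1}^n|D_jf|^2\big)^{1/2}$. *)

theory Defs
  imports "HOL-Analysis.Analysis"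
begin

text \<open>The discrete cube Omega_n = {-1,1}^n, represented by functions nat => real
  that take values in {-1,1} on coordinates 0..n-1 and are fixed to 1 elsewhere.\<close>
definition cube :: "nat \<Rightarrow> (nat \<Rightarrow> real) set" where
  "cube n = {x. (\<forall>i<n. x i = -1 \<or> x i = 1) \<and> (\<forall>i\<ge>n. x i = 1)}"

definition cexp :: "nat \<Rightarrow> ((nat \<Rightarrow> real) \<Rightarrow> real) \<Rightarrow> real" where
  "cexp n g = (\<Sum>x\<in>cube n. g x) / 2 ^ n"

definition Lp_norm :: "nat \<Rightarrow> real \<Rightarrow> ((nat \<Rightarrow> real) \<Rightarrow> real) \<Rightarrow> real" where
  "Lp_norm n p g = (cexp n (\<lambda>x. \<bar>g x\<bar> powr p)) powr (1 / p)"

definition walsh :: "nat set \<Rightarrow> (nat \<Rightarrow> real) \<Rightarrow> real" where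
  "walsh S x = (\<Prod>i\<in>S. x i)"

definition degree_le :: "nat \<Rightarrow> nat \<Rightarrow> ((nat \<Rightarrow> real) \<Rightarrow> real) \<Rightarrow> bool" where
  "degree_le n d f \<longleftrightarrow> (\<exists>c :: nat set \<Rightarrow> real. \<forall>x\<in>cube n.
      f x = (\<Sum>S\<in>{S. S \<subseteq> {..<n} \<and> card S \<le> d}. c S * walsh S x))"

definition flip :: "nat \<Rightarrow> (nat \<Rightarrow> real) \<Rightarrow> (nat \<Rightarrow> real)" where
  "flip j x = x(j := - x j)"

definition Dj :: "nat \<Rightarrow> ((nat \<Rightarrow> real) \<Rightarrow> real) \<Rightarrow> (nat \<Rightarrow> real) \<Rightarrow> real" where
  "Dj j f x = (f x - f (flip j x)) / 2"

definition grad_norm :: "nat \<Rightarrow> ((nat \<Rightarrow> real) \<Rightarrow> real) \<Rightarrow> (nat \<Rightarrow> real) \<Rightarrow> real" where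
  "grad_norm n f x = sqrt (\<Sum>j<n. (Dj j f x)\<^sup>2)"

end

theory Submission
  imports Defs
begin


lemma cube_Suc: "cube (Suc n) = (\<lambda>(\<xi>,e). \<xi>(n:=e)) ` (cube n \<times> {-1,1})"
proof (rule set_eqI, rule iffI)
  fix y assume y: "y \<in> cube (Suc n)"
  have "y(n:=1) \<in> cube n" using y unfolding cube_def
    by (simp add: less_Suc_eq)
  moreover have "y n \<in> {-1,1}" using y unfolding cube_def by simp
  moreover have "y = (y(n:=1))(n := y n)" by simp
  ultimately show "y \<in> (\<lambda>(\<xi>,e). \<xi>(n:=e)) ` (cube n \<times> {-1,1})"
    by (metis (no_types, lifting) SigmaI case_prod_conv image_eqI)
next
  fix y assume "y \<in> (\<lambda>(\<xi>,e). \<xi>(n:=e)) ` (cube n \<times> {-1,1})"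
  then obtain \<xi> e where "\<xi> \<in> cube n" "e \<in> {-1,1}" "y = \<xi>(n:=e)" by auto
  then show "y \<in> cube (Suc n)" unfolding cube_def by (auto simp: less_Suc_eq)
qed


lemma cube_Suc_inj: "inj_on (\<lambda>(\<xi>,e). \<xi>(n:=e)) (cube n \<times> {-1,1})"
proof (rule inj_onI)
  fix p q assume P: "p \<in> cube n \<times> {-1,1}" "q \<in> cube n \<times> {-1,1}"
    and E: "(\<lambda>(\<xi>,e). \<xi>(n:=e)) p = (\<lambda>(\<xi>,e). \<xi>(n:=e)) q"
  obtain a b where p: "p = (a,b)" by (cases p)
  obtain a' b' where q: "q = (a',b')" by (cases q)
  have A: "a \<in> cube n" "a' \<in> cube n" "a(n := b) = a'(n := b')" using P E p q by auto
  have "b = b'" using fun_cong[OF A(3), of n] by simp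
  moreover have "a = a'"
  proof
    fix i show "a i = a' i"
    proof (cases "i = n")
      case True then show ?thesis using A(1,2) unfolding cube_def by simp
    next
      case False then show ?thesis using fun_cong[OF A(3), of i] by simp
    qed
  qed
  ultimately show "p = q" using p q by simp
qed

lemma cube_0: "cube 0 = {\<lambda>_. 1}"
  unfolding cube_def by auto

lemma finite_cube: "finite (cube n)"
proof (induction n)
  case 0 then show ?case by (simp add: cube_0)
next
  case (Suc n) then show ?case unfolding cube_Suc by simp
qed

lemma one_in_cube: "(\<lambda>_. 1) \<in> cube n"
  by (simp add: cube_def)

lemma cube_ne: "cube n \<noteq> {}"
  using one_in_cube by blast

lemma sum_cube_prod:
  fixes F :: "nat \<Rightarrow> real \<Rightarrow> real"
  shows "(\<Sum>\<xi>\<in>cube n. \<Prod>i<n. F i (\<xi> i)) = (\<Prod>i<n. F i 1 + F i (-1))"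
proof (induction n)
  case 0 then show ?case by (simp add: cube_0)
next
  case (Suc n)
  have "(\<Sum>\<xi>\<in>cube (Suc n). \<Prod>i<Suc n. F i (\<xi> i))
      = (\<Sum>q\<in>cube n \<times> {-1,1}. \<Prod>i<Suc n. F i (((\<lambda>(\<xi>,e). \<xi>(n:=e)) q) i))"
    unfolding cube_Suc by (rule sum.reindex[OF cube_Suc_inj, unfolded comp_def])
  also have "\<dots> = (\<Sum>q\<in>cube n \<times> {-1,1}. (\<Prod>i<n. F i (fst q i)) * F n (snd q))"
  proof (rule sum.cong[OF refl])
    fix q :: "(nat \<Rightarrow> real) \<times> real"
    obtain a b where q: "q = (a,b)" by (cases q)
    have "(\<Prod>i<Suc n. F i ((a(n:=b)) i)) = (\<Prod>i<n. F i ((a(n:=b)) i)) * F n b"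
      by simp
    also have "(\<Prod>i<n. F i ((a(n:=b)) i)) = (\<Prod>i<n. F i (a i))"
      by (rule prod.cong) auto
    finally show "(\<Prod>i<Suc n. F i (((\<lambda>(\<xi>,e). \<xi>(n:=e)) q) i)) = (\<Prod>i<n. F i (fst q i)) * F n (snd q)"
      using q by simp
  qed
  also have "\<dots> = (\<Sum>\<xi>\<in>cube n. \<Sum>e\<in>{-1,1}. (\<Prod>i<n. F i (\<xi> i)) * F n e)"
    unfolding sum.cartesian_product by (simp add: case_prod_beta)
  also have "\<dots> = (\<Sum>\<xi>\<in>cube n. (\<Prod>i<n. F i (\<xi> i)) * (F n 1 + F n (-1)))"
    by (rule sum.cong[OF refl]) (simp add: distrib_left add.commute)
  also have "\<dots> = (\<Sum>\<xi>\<in>cube n. (\<Prod>i<n. F i (\<xi> i))) * (F n 1 + F n (-1))"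
    by (simp add: sum_distrib_right)
  finally show ?case using Suc by simp
qed


definition pw :: "nat \<Rightarrow> real \<Rightarrow> (nat \<Rightarrow> real) \<Rightarrow> (nat \<Rightarrow> real) \<Rightarrow> real" where
  "pw n r x \<xi> = (\<Prod>i<n. (1 + r * x i * \<xi> i) / 2)"

lemma walsh_as_prod:
  assumes "S \<subseteq> {..<n}"
  shows "walsh S \<xi> = (\<Prod>i<n. if i \<in> S then \<xi> i else 1)"
proof -
  have "(\<Prod>i<n. if i \<in> S then \<xi> i else 1) = prod \<xi> ({..<n} \<inter> S)"
    by (simp add: prod.inter_restrict)
  also have "{..<n} \<inter> S = S" using assms by blast
  finally show ?thesis by (simp add: walsh_def)
qed

lemma pw_sum1: "(\<Sum>\<xi>\<in>cube n. pw n r x \<xi>) = 1"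
  unfolding pw_def using sum_cube_prod[of "\<lambda>i e. (1 + r * x i * e) / 2" n]
  by (simp add: field_simps)

lemma pw_walsh:
  assumes "S \<subseteq> {..<n}"
  shows "(\<Sum>\<xi>\<in>cube n. pw n r x \<xi> * walsh S \<xi>) = r ^ card S * walsh S x"
proof -
  have "(\<Sum>\<xi>\<in>cube n. pw n r x \<xi> * walsh S \<xi>)
      = (\<Sum>\<xi>\<in>cube n. \<Prod>i<n. (1 + r * x i * \<xi> i) / 2 * (if i \<in> S then \<xi> i else 1))"
    unfolding pw_def walsh_as_prod[OF assms] prod.distrib by (rule refl)
  also have "\<dots> = (\<Prod>i<n. (1 + r * x i * 1) / 2 * (if i \<in> S then 1 else 1)
                          + (1 + r * x i * (-1)) / 2 * (if i \<in> S then -1 else 1))"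
    by (rule sum_cube_prod[of "\<lambda>i e. (1 + r * x i * e) / 2 * (if i \<in> S then e else 1)"])
  also have "\<dots> = (\<Prod>i<n. if i \<in> S then r * x i else 1)"
    by (rule prod.cong) (auto simp: field_simps)
  also have "\<dots> = prod (\<lambda>i. r * x i) ({..<n} \<inter> S)"
    by (simp add: prod.inter_restrict)
  also have "{..<n} \<inter> S = S" using assms by blast
  finally show ?thesis
    using assms by (simp add: prod.distrib walsh_def finite_subset)
qed

lemma cube_sq: "\<xi> \<in> cube n \<Longrightarrow> j < n \<Longrightarrow> \<xi> j * \<xi> j = 1"
  unfolding cube_def by auto

lemma cube_abs: "\<xi> \<in> cube n \<Longrightarrow> j < n \<Longrightarrow> \<bar>\<xi> j\<bar> = 1"
  unfolding cube_def by auto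

lemma pw_nonneg:
  assumes "\<bar>r\<bar> \<le> 1" "x \<in> cube n" "\<xi> \<in> cube n"
  shows "pw n r x \<xi> \<ge> 0"
  unfolding pw_def
proof (rule prod_nonneg)
  fix i assume "i \<in> {..<n}"
  then have "\<bar>x i\<bar> = 1" "\<bar>\<xi> i\<bar> = 1" using assms cube_abs by auto
  then have "\<bar>r * x i * \<xi> i\<bar> \<le> 1" using assms by (simp add: abs_mult)
  then have "-1 \<le> r * x i * \<xi> i" by (simp add: abs_le_iff)
  then show "0 \<le> (1 + r * x i * \<xi> i) / 2" by simp
qed

lemma pw_sym: "pw n r x \<xi> = pw n r \<xi> x"
  unfolding pw_def by (simp add: mult.commute mult.left_commute)

lemma walsh_remove: "finite S \<Longrightarrow> j \<in> S \<Longrightarrow> walsh S \<xi> = \<xi> j * walsh (S - {j}) \<xi>"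
  unfolding walsh_def by (simp add: prod.remove)

lemma walsh_insert: "finite S \<Longrightarrow> j \<notin> S \<Longrightarrow> walsh (insert j S) \<xi> = \<xi> j * walsh S \<xi>"
  unfolding walsh_def by simp

lemma walsh_flip:
  assumes "finite S"
  shows "walsh S (flip j x) = (if j \<in> S then - walsh S x else walsh S x)"
proof (cases "j \<in> S")
  case True
  have "walsh S (flip j x) = flip j x j * walsh (S - {j}) (flip j x)"
    using walsh_remove[OF assms True] by blast
  also have "walsh (S - {j}) (flip j x) = walsh (S - {j}) x"
    unfolding walsh_def flip_def by (rule prod.cong) auto
  also have "flip j x j = - x j" by (simp add: flip_def)
  finally show ?thesis using True walsh_remove[OF assms True, of x] by simp
next
  case False
  have "walsh S (flip j x) = walsh S x"
    unfolding walsh_def flip_def using False by (intro prod.cong) auto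
  then show ?thesis using False by simp
qed

lemma Dj_poly:
  assumes "finite I" "\<And>S. S \<in> I \<Longrightarrow> finite S"
  shows "Dj j (\<lambda>x. \<Sum>S\<in>I. b S * walsh S x) x = (\<Sum>S\<in>I. if j \<in> S then b S * walsh S x else 0)"
proof -
  have "Dj j (\<lambda>x. \<Sum>S\<in>I. b S * walsh S x) x
      = (\<Sum>S\<in>I. (b S * walsh S x - b S * walsh S (flip j x)) / 2)"
    unfolding Dj_def by (simp only: sum_divide_distrib[symmetric] sum_subtractf)
  also have "\<dots> = (\<Sum>S\<in>I. if j \<in> S then b S * walsh S x else 0)"
    by (rule sum.cong[OF refl]) (simp add: walsh_flip assms)
  finally show ?thesis .
qed




lemma pw_xi:
  assumes "j < n"
  shows "(\<Sum>\<xi>\<in>cube n. pw n r x \<xi> * \<xi> j) = r * x j"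
  using pw_walsh[of "{j}" n r x] assms by (simp add: walsh_def)

lemma pw_xixk:
  assumes "j < n" "k < n"
  shows "(\<Sum>\<xi>\<in>cube n. pw n r x \<xi> * (\<xi> j * \<xi> k)) = (if j = k then 1 else r\<^sup>2 * x j * x k)"
proof (cases "j = k")
  case True
  have "(\<Sum>\<xi>\<in>cube n. pw n r x \<xi> * (\<xi> j * \<xi> k)) = (\<Sum>\<xi>\<in>cube n. pw n r x \<xi>)"
    by (rule sum.cong[OF refl]) (simp add: True cube_sq assms)
  then show ?thesis using True pw_sum1 by simp
next
  case False
  have "(\<Sum>\<xi>\<in>cube n. pw n r x \<xi> * (\<xi> j * \<xi> k)) = (\<Sum>\<xi>\<in>cube n. pw n r x \<xi> * walsh {j,k} \<xi>)"
    using False by (simp add: walsh_def)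
  also have "\<dots> = r ^ card {j,k} * walsh {j,k} x"
    by (rule pw_walsh) (use assms in auto)
  finally show ?thesis using False by (simp add: walsh_def power2_eq_square)
qed

lemma pw_cov:
  assumes "x \<in> cube n" "j < n" "k < n"
  shows "(\<Sum>\<xi>\<in>cube n. pw n r x \<xi> * ((\<xi> j - r * x j) * (\<xi> k - r * x k)))
       = (if j = k then 1 - r\<^sup>2 else 0)"
proof -
  have "(\<Sum>\<xi>\<in>cube n. pw n r x \<xi> * ((\<xi> j - r * x j) * (\<xi> k - r * x k)))
     = (\<Sum>\<xi>\<in>cube n. pw n r x \<xi> * (\<xi> j * \<xi> k) - (r * x j) * (pw n r x \<xi> * \<xi> k)
            - (r * x k) * (pw n r x \<xi> * \<xi> j) + (r * x j * (r * x k)) * pw n r x \<xi>)"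
    by (rule sum.cong[OF refl]) (simp add: algebra_simps)
  also have "\<dots> = (\<Sum>\<xi>\<in>cube n. pw n r x \<xi> * (\<xi> j * \<xi> k)) - (r * x j) * (\<Sum>\<xi>\<in>cube n. pw n r x \<xi> * \<xi> k)
            - (r * x k) * (\<Sum>\<xi>\<in>cube n. pw n r x \<xi> * \<xi> j) + (r * x j * (r * x k)) * (\<Sum>\<xi>\<in>cube n. pw n r x \<xi>)"
    by (simp add: sum.distrib sum_subtractf sum_distrib_left)
  also have "\<dots> = (if j = k then 1 else r\<^sup>2 * x j * x k) - (r * x j) * (r * x k)
            - (r * x k) * (r * x j) + (r * x j * (r * x k))"
    using pw_xixk[OF assms(2,3)] pw_xi[OF assms(2)] pw_xi[OF assms(3)] pw_sum1 by simp
  also have "\<dots> = (if j = k then 1 - r\<^sup>2 else 0)"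
    using cube_sq[OF assms(1) assms(2)] by (auto simp: power2_eq_square algebra_simps)
  finally show ?thesis .
qed

lemma pw_walsh_grad:
  assumes S: "S \<subseteq> {..<n}" and j: "j < n" and x: "x \<in> cube n"
  shows "r * (\<Sum>\<xi>\<in>cube n. pw n r x \<xi> * walsh S \<xi> * (x j * (\<xi> j - r * x j)))
       = (if j \<in> S then (1 - r\<^sup>2) * (r ^ card S * walsh S x) else 0)"
proof -
  have finS: "finite S" using S finite_subset by blast
  have xj: "x j * x j = 1" using cube_sq[OF x j] .
  have split: "(\<Sum>\<xi>\<in>cube n. pw n r x \<xi> * walsh S \<xi> * (x j * (\<xi> j - r * x j)))
     = x j * (\<Sum>\<xi>\<in>cube n. pw n r x \<xi> * (walsh S \<xi> * \<xi> j))
       - r * x j * x j * (\<Sum>\<xi>\<in>cube n. pw n r x \<xi> * walsh S \<xi>)"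
  proof -
    have "(\<Sum>\<xi>\<in>cube n. pw n r x \<xi> * walsh S \<xi> * (x j * (\<xi> j - r * x j)))
       = (\<Sum>\<xi>\<in>cube n. x j * (pw n r x \<xi> * (walsh S \<xi> * \<xi> j)) - r * x j * x j * (pw n r x \<xi> * walsh S \<xi>))"
      by (rule sum.cong[OF refl]) (simp add: algebra_simps)
    then show ?thesis by (simp add: sum_subtractf sum_distrib_left)
  qed
  show ?thesis
  proof (cases "j \<in> S")
    case True
    have "(\<Sum>\<xi>\<in>cube n. pw n r x \<xi> * (walsh S \<xi> * \<xi> j)) = (\<Sum>\<xi>\<in>cube n. pw n r x \<xi> * walsh (S - {j}) \<xi>)"
    proof (rule sum.cong[OF refl])
      fix \<xi> assume "\<xi> \<in> cube n"
      then have "\<xi> j * \<xi> j = 1" using cube_sq j by blast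
      then show "pw n r x \<xi> * (walsh S \<xi> * \<xi> j) = pw n r x \<xi> * walsh (S - {j}) \<xi>"
        using walsh_remove[OF finS True, of \<xi>] by (simp add: algebra_simps)
    qed
    also have "\<dots> = r ^ card (S - {j}) * walsh (S - {j}) x"
      by (rule pw_walsh) (use S in auto)
    finally have A: "(\<Sum>\<xi>\<in>cube n. pw n r x \<xi> * (walsh S \<xi> * \<xi> j)) = r ^ (card S - 1) * walsh (S - {j}) x"
      using True finS by simp
    have "card S \<noteq> 0" using True finS by auto
    then have cS: "card S \<ge> 1" by simp
    have rr: "r * r ^ (card S - 1) = r ^ card S"
      using cS by (metis Suc_diff_le diff_Suc_1 power_Suc)
    have W: "walsh S x = x j * walsh (S - {j}) x" using walsh_remove[OF finS True] .
    have "r * (x j * (r ^ (card S - 1) * walsh (S - {j}) x) - r * x j * x j * (r ^ card S * walsh S x))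
        = (r * r ^ (card S - 1)) * (x j * walsh (S - {j}) x) - r * r * (x j * x j) * (r ^ card S * walsh S x)"
      by (simp add: algebra_simps)
    also have "\<dots> = (1 - r\<^sup>2) * (r ^ card S * walsh S x)"
      unfolding rr xj W[symmetric] by (simp add: power2_eq_square algebra_simps)
    finally show ?thesis using True split A pw_walsh[OF S] by simp
  next
    case False
    have "(\<Sum>\<xi>\<in>cube n. pw n r x \<xi> * (walsh S \<xi> * \<xi> j)) = (\<Sum>\<xi>\<in>cube n. pw n r x \<xi> * walsh (insert j S) \<xi>)"
      using walsh_insert[OF finS False] by (simp add: mult.commute)
    also have "\<dots> = r ^ card (insert j S) * walsh (insert j S) x"
      by (rule pw_walsh) (use S j in auto)
    also have "\<dots> = r * r ^ card S * (x j * walsh S x)"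
      using walsh_insert[OF finS False] finS False by simp
    finally have A: "(\<Sum>\<xi>\<in>cube n. pw n r x \<xi> * (walsh S \<xi> * \<xi> j)) = r * r ^ card S * (x j * walsh S x)" .
    have "r * (x j * (r * r ^ card S * (x j * walsh S x)) - r * x j * x j * (r ^ card S * walsh S x)) = 0"
      by (simp add: algebra_simps)
    then show ?thesis using False split A pw_walsh[OF S] by simp
  qed
qed

lemma pw_psi:
  assumes x: "x \<in> cube n"
  shows "(\<Sum>\<xi>\<in>cube n. pw n r x \<xi> * (\<Sum>j<n. a j * (x j * (\<xi> j - r * x j)))\<^sup>2)
       = (1 - r\<^sup>2) * (\<Sum>j<n. (a j)\<^sup>2)"
proof -
  define u where "u \<xi> j = a j * (x j * (\<xi> j - r * x j))" for \<xi> j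
  have "(\<Sum>\<xi>\<in>cube n. pw n r x \<xi> * (\<Sum>j<n. u \<xi> j)\<^sup>2)
      = (\<Sum>\<xi>\<in>cube n. \<Sum>j<n. \<Sum>k<n. pw n r x \<xi> * (u \<xi> j * u \<xi> k))"
    unfolding power2_eq_square sum_product by (simp add: sum_distrib_left)
  also have "\<dots> = (\<Sum>j<n. \<Sum>k<n. \<Sum>\<xi>\<in>cube n. pw n r x \<xi> * (u \<xi> j * u \<xi> k))"
    by (subst sum.swap, rule sum.cong[OF refl], subst sum.swap, rule refl)
  also have "\<dots> = (\<Sum>j<n. \<Sum>k<n. (a j * x j * (a k * x k)) *
                     (\<Sum>\<xi>\<in>cube n. pw n r x \<xi> * ((\<xi> j - r * x j) * (\<xi> k - r * x k))))"
    unfolding u_def sum_distrib_left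
    by (intro sum.cong refl) (simp add: algebra_simps)
  also have "\<dots> = (\<Sum>j<n. \<Sum>k<n. if j = k then (a j * x j * (a j * x j)) * (1 - r\<^sup>2) else 0)"
    by (intro sum.cong refl) (simp add: pw_cov[OF x])
  also have "\<dots> = (\<Sum>j<n. (a j * x j * (a j * x j)) * (1 - r\<^sup>2))"
    by (rule sum.cong[OF refl]) simp
  also have "\<dots> = (\<Sum>j<n. (1 - r\<^sup>2) * (a j)\<^sup>2)"
  proof (rule sum.cong[OF refl])
    fix j assume "j \<in> {..<n}"
    then have "x j * x j = 1" using cube_sq x by blast
    then show "a j * x j * (a j * x j) * (1 - r\<^sup>2) = (1 - r\<^sup>2) * (a j)\<^sup>2"
      by (simp add: power2_eq_square algebra_simps)
  qed
  finally show ?thesis unfolding u_def by (simp add: sum_distrib_left)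
qed




lemma key_est:
  assumes r: "\<bar>r\<bar> < 1" and x: "x \<in> cube n" and I: "finite I" "\<And>S. S \<in> I \<Longrightarrow> S \<subseteq> {..<n}"
  shows "(1 - r\<^sup>2) * (\<Sum>j<n. (Dj j (\<lambda>y. \<Sum>S\<in>I. b S * r ^ card S * walsh S y) x)\<^sup>2)
         \<le> r\<^sup>2 * (\<Sum>\<xi>\<in>cube n. pw n r x \<xi> * (\<Sum>S\<in>I. b S * walsh S \<xi>)\<^sup>2)"
proof -
  have finS: "\<And>S. S \<in> I \<Longrightarrow> finite S" using I(2) finite_subset by blast
  define a where "a j = Dj j (\<lambda>y. \<Sum>S\<in>I. b S * r ^ card S * walsh S y) x" for j
  have a_eq: "a j = (\<Sum>S\<in>I. if j \<in> S then b S * r ^ card S * walsh S x else 0)" for j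
    unfolding a_def using Dj_poly[OF I(1) finS, of j "\<lambda>S. b S * r ^ card S" x] by simp
  define g where "g \<xi> = (\<Sum>S\<in>I. b S * walsh S \<xi>)" for \<xi>
  define t where "t \<xi> j = x j * (\<xi> j - r * x j)" for \<xi> j
  have grad_j: "r * (\<Sum>\<xi>\<in>cube n. pw n r x \<xi> * g \<xi> * t \<xi> j) = (1 - r\<^sup>2) * a j" if j: "j < n" for j
  proof -
    have "(\<Sum>\<xi>\<in>cube n. pw n r x \<xi> * g \<xi> * t \<xi> j)
        = (\<Sum>\<xi>\<in>cube n. \<Sum>S\<in>I. b S * (pw n r x \<xi> * walsh S \<xi> * t \<xi> j))"
      unfolding g_def by (intro sum.cong refl) (simp add: sum_distrib_left sum_distrib_right mult_ac)
    also have "\<dots> = (\<Sum>S\<in>I. \<Sum>\<xi>\<in>cube n. b S * (pw n r x \<xi> * walsh S \<xi> * t \<xi> j))"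
      by (rule sum.swap)
    also have "\<dots> = (\<Sum>S\<in>I. b S * (\<Sum>\<xi>\<in>cube n. pw n r x \<xi> * walsh S \<xi> * t \<xi> j))"
      by (simp add: sum_distrib_left)
    finally have "r * (\<Sum>\<xi>\<in>cube n. pw n r x \<xi> * g \<xi> * t \<xi> j)
        = (\<Sum>S\<in>I. b S * (r * (\<Sum>\<xi>\<in>cube n. pw n r x \<xi> * walsh S \<xi> * t \<xi> j)))"
      by (simp add: sum_distrib_left mult_ac)
    also have "\<dots> = (\<Sum>S\<in>I. b S * (if j \<in> S then (1 - r\<^sup>2) * (r ^ card S * walsh S x) else 0))"
      unfolding t_def by (intro sum.cong refl) (simp add: pw_walsh_grad[OF I(2) j x])
    also have "\<dots> = (1 - r\<^sup>2) * a j"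
      unfolding a_eq sum_distrib_left by (intro sum.cong refl) (simp add: algebra_simps)
    finally show ?thesis .
  qed
  define \<Psi> where "\<Psi> \<xi> = (\<Sum>j<n. a j * t \<xi> j)" for \<xi>
  define A where "A = (\<Sum>j<n. (a j)\<^sup>2)"
  define G where "G = (\<Sum>\<xi>\<in>cube n. pw n r x \<xi> * (g \<xi>)\<^sup>2)"
  define T where "T = (\<Sum>\<xi>\<in>cube n. pw n r x \<xi> * g \<xi> * \<Psi> \<xi>)"
  have rT: "r * T = (1 - r\<^sup>2) * A"
  proof -
    have "T = (\<Sum>\<xi>\<in>cube n. \<Sum>j<n. a j * (pw n r x \<xi> * g \<xi> * t \<xi> j))"
      unfolding T_def \<Psi>_def by (intro sum.cong refl) (simp add: sum_distrib_left mult_ac)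
    also have "\<dots> = (\<Sum>j<n. \<Sum>\<xi>\<in>cube n. a j * (pw n r x \<xi> * g \<xi> * t \<xi> j))"
      by (rule sum.swap)
    also have "\<dots> = (\<Sum>j<n. a j * (\<Sum>\<xi>\<in>cube n. pw n r x \<xi> * g \<xi> * t \<xi> j))"
      by (simp add: sum_distrib_left)
    finally have "r * T = (\<Sum>j<n. a j * (r * (\<Sum>\<xi>\<in>cube n. pw n r x \<xi> * g \<xi> * t \<xi> j)))"
      by (simp add: sum_distrib_left mult_ac)
    also have "\<dots> = (\<Sum>j<n. a j * ((1 - r\<^sup>2) * a j))"
      by (intro sum.cong refl) (simp add: grad_j)
    also have "\<dots> = (1 - r\<^sup>2) * A"
      unfolding A_def sum_distrib_left by (intro sum.cong refl) (simp add: power2_eq_square)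
    finally show ?thesis .
  qed
  have Psi2: "(\<Sum>\<xi>\<in>cube n. pw n r x \<xi> * (\<Psi> \<xi>)\<^sup>2) = (1 - r\<^sup>2) * A"
    unfolding \<Psi>_def t_def A_def using pw_psi[OF x, of r a] .
  have pwnn: "\<And>\<xi>. \<xi> \<in> cube n \<Longrightarrow> pw n r x \<xi> \<ge> 0"
    using pw_nonneg r x by simp
  have CS: "T\<^sup>2 \<le> G * ((1 - r\<^sup>2) * A)"
  proof -
    have "T = (\<Sum>\<xi>\<in>cube n. (sqrt (pw n r x \<xi>) * g \<xi>) * (sqrt (pw n r x \<xi>) * \<Psi> \<xi>))"
      unfolding T_def
    proof (intro sum.cong refl)
      fix \<xi> assume "\<xi> \<in> cube n"
      then have "sqrt (pw n r x \<xi>) * sqrt (pw n r x \<xi>) = pw n r x \<xi>" using pwnn by simp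
      moreover have "sqrt (pw n r x \<xi>) * g \<xi> * (sqrt (pw n r x \<xi>) * \<Psi> \<xi>)
          = (sqrt (pw n r x \<xi>) * sqrt (pw n r x \<xi>)) * g \<xi> * \<Psi> \<xi>" by (simp add: mult_ac)
      ultimately show "pw n r x \<xi> * g \<xi> * \<Psi> \<xi> = sqrt (pw n r x \<xi>) * g \<xi> * (sqrt (pw n r x \<xi>) * \<Psi> \<xi>)"
        by simp
    qed
    then have "T\<^sup>2 \<le> (\<Sum>\<xi>\<in>cube n. (sqrt (pw n r x \<xi>) * g \<xi>)\<^sup>2) * (\<Sum>\<xi>\<in>cube n. (sqrt (pw n r x \<xi>) * \<Psi> \<xi>)\<^sup>2)"
      using Cauchy_Schwarz_ineq_sum by simp
    also have "(\<Sum>\<xi>\<in>cube n. (sqrt (pw n r x \<xi>) * g \<xi>)\<^sup>2) = G"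
      unfolding G_def by (intro sum.cong refl) (simp add: power_mult_distrib pwnn)
    also have "(\<Sum>\<xi>\<in>cube n. (sqrt (pw n r x \<xi>) * \<Psi> \<xi>)\<^sup>2) = (1 - r\<^sup>2) * A"
      unfolding Psi2[symmetric] by (intro sum.cong refl) (simp add: power_mult_distrib pwnn)
    finally show ?thesis .
  qed
  have A0: "A \<ge> 0" unfolding A_def by (simp add: sum_nonneg)
  have G0: "G \<ge> 0" unfolding G_def by (intro sum_nonneg) (simp add: pwnn)
  have q: "1 - r\<^sup>2 > 0" using r abs_square_less_1[of r] by simp
  have "((1 - r\<^sup>2) * A)\<^sup>2 = r\<^sup>2 * T\<^sup>2" using rT by (metis power_mult_distrib)
  also have "\<dots> \<le> r\<^sup>2 * (G * ((1 - r\<^sup>2) * A))" using CS by (simp add: mult_left_mono)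
  finally have M: "((1 - r\<^sup>2) * A) * ((1 - r\<^sup>2) * A) \<le> ((1 - r\<^sup>2) * A) * (r\<^sup>2 * G)"
    by (simp add: power2_eq_square algebra_simps)
  have "(1 - r\<^sup>2) * A \<le> r\<^sup>2 * G"
  proof (cases "A = 0")
    case True then show ?thesis using G0 by simp
  next
    case False
    then have "(1 - r\<^sup>2) * A > 0" using A0 q by simp
    then show ?thesis using M by (simp add: mult_le_cancel_left_pos)
  qed
  then show ?thesis unfolding A_def a_def G_def g_def .
qed




lemma sin_jordan:
  assumes "0 \<le> x" "x \<le> pi / 2"
  shows "2 * x / pi \<le> sin x"
proof -
  have cvx: "convex_on {0..pi} (\<lambda>x. - sin x)"
  proof (rule f''_ge0_imp_convex[where f' = "\<lambda>x. - cos x" and f'' = "\<lambda>x. sin x"])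
    show "convex {0..pi}" by simp
    show "\<And>x. x \<in> {0..pi} \<Longrightarrow> ((\<lambda>x. - sin x) has_real_derivative - cos x) (at x)"
      by (auto intro!: derivative_eq_intros)
    show "\<And>x. x \<in> {0..pi} \<Longrightarrow> ((\<lambda>x. - cos x) has_real_derivative sin x) (at x)"
      by (auto intro!: derivative_eq_intros)
    show "\<And>x. x \<in> {0..pi} \<Longrightarrow> 0 \<le> sin x" by (simp add: sin_ge_zero)
  qed
  define t where "t = 2 * x / pi"
  have t: "0 \<le> t" "t \<le> 1" using assms pi_gt_zero unfolding t_def by (auto simp: field_simps)
  have "- sin ((1 - t) *\<^sub>R 0 + t *\<^sub>R (pi/2)) \<le> (1 - t) * (- sin 0) + t * (- sin (pi/2))"
    by (rule convex_onD[OF cvx]) (use t pi_gt_zero in auto)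
  moreover have "(1 - t) *\<^sub>R 0 + t *\<^sub>R (pi/2) = x" unfolding t_def by simp
  ultimately show ?thesis unfolding t_def by simp
qed

lemma sin_zero_int_mult:
  fixes m :: int
  shows "sin (real_of_int m * pi) = 0"
  by (simp add: sin_zero_iff_int2)

definition NN :: "nat \<Rightarrow> nat" where "NN d = 2 * d + 2"
definition th :: "nat \<Rightarrow> nat \<Rightarrow> real" where "th d k = (2 * real k + 1) * pi / real (NN d)"
definition Dk :: "nat \<Rightarrow> real \<Rightarrow> real" where "Dk d t = 1 + 2 * (\<Sum>j<d. cos (real (Suc j) * t))"
definition wt :: "nat \<Rightarrow> nat \<Rightarrow> real" where "wt d k = Dk d (th d k) / real (NN d)"

lemma cos_sum_zero:
  fixes m :: int
  assumes "m \<noteq> 0" "\<bar>m\<bar> < int (NN d)"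
  shows "(\<Sum>k<NN d. cos (real_of_int m * th d k)) = 0"
proof -
  define N where "N = real (NN d)"
  have N0: "N > 0" unfolding N_def NN_def by simp
  define \<alpha> where "\<alpha> = real_of_int m * pi / N"
  have sa: "sin \<alpha> \<noteq> 0"
  proof
    assume "sin \<alpha> = 0"
    then obtain i :: int where i: "\<alpha> = real_of_int i * pi" by (auto simp: sin_zero_iff_int2)
    then have "real_of_int m = real_of_int i * N" unfolding \<alpha>_def using N0 pi_gt_zero by (simp add: field_simps)
    then have mi: "m = i * int (NN d)" unfolding N_def by (metis of_int_eq_iff of_int_mult of_int_of_nat_eq)
    show False
    proof (cases "i = 0")
      case True then show False using mi assms by simp
    next
      case False
      then have "\<bar>i\<bar> \<ge> 1" by simp
      then have "\<bar>i\<bar> * int (NN d) \<ge> 1 * int (NN d)" by (intro mult_right_mono) auto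
      then have "\<bar>i * int (NN d)\<bar> \<ge> int (NN d)" by (simp add: abs_mult)
      then show False using mi assms by simp
    qed
  qed
  have tel: "2 * sin \<alpha> * cos (real_of_int m * th d k) = sin (2 * real (Suc k) * \<alpha>) - sin (2 * real k * \<alpha>)" for k
  proof -
    have e: "real_of_int m * th d k = (2 * real k + 1) * \<alpha>"
      unfolding th_def \<alpha>_def N_def by (simp add: field_simps)
    have "sin (2 * real (Suc k) * \<alpha>) = sin ((2 * real k + 1) * \<alpha> + \<alpha>)" by (simp add: algebra_simps)
    moreover have "sin (2 * real k * \<alpha>) = sin ((2 * real k + 1) * \<alpha> - \<alpha>)" by (simp add: algebra_simps)
    ultimately show ?thesis unfolding e by (simp add: sin_add sin_diff)
  qed
  have "2 * sin \<alpha> * (\<Sum>k<NN d. cos (real_of_int m * th d k))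
      = (\<Sum>k<NN d. sin (2 * real (Suc k) * \<alpha>) - sin (2 * real k * \<alpha>))"
    unfolding sum_distrib_left tel by simp
  also have "\<dots> = sin (2 * real (NN d) * \<alpha>) - sin (2 * real 0 * \<alpha>)"
    by (rule sum_lessThan_telescope[where f = "\<lambda>k. sin (2 * real k * \<alpha>)"])
  also have "2 * real (NN d) * \<alpha> = real_of_int (2 * m) * pi"
    unfolding \<alpha>_def N_def using N0 N_def by (simp add: field_simps)
  moreover have "sin (2 * real_of_int m * pi) = 0" using sin_zero_int_mult[of "2*m"] by simp
  ultimately have "2 * sin \<alpha> * (\<Sum>k<NN d. cos (real_of_int m * th d k)) = 0"
    by simp
  then show ?thesis using sa by simp
qed

lemma cos_sum:
  fixes m :: int
  assumes "\<bar>m\<bar> < int (NN d)"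
  shows "(\<Sum>k<NN d. cos (real_of_int m * th d k)) = (if m = 0 then real (NN d) else 0)"
  using cos_sum_zero[OF _ assms] by auto

lemma wt_cos:
  assumes "m \<le> d"
  shows "(\<Sum>k<NN d. wt d k * cos (real m * th d k)) = 1"
proof -
  define N where "N = NN d"
  have "(\<Sum>k<N. Dk d (th d k) * cos (real m * th d k))
      = (\<Sum>k<N. cos (real m * th d k)) + (\<Sum>j<d. (\<Sum>k<N. cos (real_of_int (int (Suc j) + int m) * th d k))
            + (\<Sum>k<N. cos (real_of_int (int (Suc j) - int m) * th d k)))"
  proof -
    have "\<And>k j. 2 * cos (real (Suc j) * th d k) * cos (real m * th d k)
          = cos (real_of_int (int (Suc j) + int m) * th d k) + cos (real_of_int (int (Suc j) - int m) * th d k)"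
    proof -
      fix k j
      have "cos (real_of_int (int (Suc j) + int m) * th d k) = cos (real (Suc j) * th d k + real m * th d k)"
        by (simp add: algebra_simps)
      moreover have "cos (real_of_int (int (Suc j) - int m) * th d k) = cos (real (Suc j) * th d k - real m * th d k)"
        by (simp add: algebra_simps)
      ultimately show "2 * cos (real (Suc j) * th d k) * cos (real m * th d k)
          = cos (real_of_int (int (Suc j) + int m) * th d k) + cos (real_of_int (int (Suc j) - int m) * th d k)"
        by (simp add: cos_add cos_diff)
    qed
    then have "(\<Sum>k<N. Dk d (th d k) * cos (real m * th d k))
        = (\<Sum>k<N. cos (real m * th d k) + (\<Sum>j<d. cos (real_of_int (int (Suc j) + int m) * th d k)
              + cos (real_of_int (int (Suc j) - int m) * th d k)))"
      unfolding Dk_def by (intro sum.cong refl) (simp add: algebra_simps sum_distrib_left sum_distrib_right)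
    also have "\<dots> = (\<Sum>k<N. cos (real m * th d k)) + (\<Sum>j<d. (\<Sum>k<N. cos (real_of_int (int (Suc j) + int m) * th d k))
            + (\<Sum>k<N. cos (real_of_int (int (Suc j) - int m) * th d k)))"
      by (simp add: sum.distrib sum.swap[of _ "{..<N}" "{..<d}"])
    finally show ?thesis .
  qed
  also have "\<dots> = (if m = 0 then real N else 0) + (\<Sum>j<d. (if Suc j = m then real N else 0))"
  proof -
    have "(\<Sum>k<N. cos (real m * th d k)) = (if m = 0 then real N else 0)"
      using cos_sum[of "int m" d] assms unfolding N_def NN_def by simp
    moreover have "(\<Sum>k<N. cos (real_of_int (int (Suc j) + int m) * th d k)) = 0" if "j < d" for j
      using cos_sum[of "int (Suc j) + int m" d] assms that unfolding N_def NN_def by simp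
    moreover have "(\<Sum>k<N. cos (real_of_int (int (Suc j) - int m) * th d k)) = (if Suc j = m then real N else 0)"
      if "j < d" for j
      using cos_sum[of "int (Suc j) - int m" d] assms that unfolding N_def NN_def by auto
    ultimately show ?thesis by simp
  qed
  also have "\<dots> = real N"
  proof (cases "m = 0")
    case True then show ?thesis by simp
  next
    case False
    then have "(\<Sum>j<d. (if Suc j = m then real N else 0)) = (\<Sum>j<d. (if j = m - 1 then real N else 0))"
      by (intro sum.cong refl) auto
    also have "\<dots> = real N" using False assms by simp
    finally show ?thesis using False by simp
  qed
  finally have "(\<Sum>k<N. Dk d (th d k) * cos (real m * th d k)) = real N" .
  moreover have "real N > 0" unfolding N_def NN_def by simp
  ultimately show ?thesis unfolding wt_def N_def[symmetric]
    by (simp add: sum_divide_distrib[symmetric])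
qed

lemma wt_cospow_cos:
  "s + m \<le> d \<Longrightarrow> (\<Sum>k<NN d. wt d k * cos (th d k) ^ s * cos (real m * th d k)) = 1"
proof (induction s arbitrary: m)
  case 0 then show ?case using wt_cos by simp
next
  case (Suc s)
  have IH1: "(\<Sum>k<NN d. wt d k * cos (th d k) ^ s * cos (real (Suc m) * th d k)) = 1"
    using Suc.IH[of "Suc m"] Suc.prems by simp
  show ?case
  proof (cases m)
    case 0
    then show ?thesis using IH1 by (simp add: mult.commute mult.left_commute)
  next
    case (Suc m')
    have IH2: "(\<Sum>k<NN d. wt d k * cos (th d k) ^ s * cos (real m' * th d k)) = 1"
      using Suc.IH[of m'] Suc.prems Suc by simp
    have c: "cos t * cos (real m * t) = (cos (real (Suc m) * t) + cos (real m' * t)) / 2" for t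
    proof -
      have "cos (real (Suc m) * t) = cos (real m * t + t)" by (simp add: algebra_simps)
      moreover have "cos (real m' * t) = cos (real m * t - t)" using Suc by (simp add: algebra_simps)
      ultimately show ?thesis by (simp add: cos_add cos_diff)
    qed
    then have "(\<Sum>k<NN d. wt d k * cos (th d k) ^ Suc s * cos (real m * th d k))
        = (\<Sum>k<NN d. (wt d k * cos (th d k) ^ s * cos (real (Suc m) * th d k)
                       + wt d k * cos (th d k) ^ s * cos (real m' * th d k)) / 2)"
    proof (intro sum.cong refl)
      fix k
      have "wt d k * cos (th d k) ^ Suc s * cos (real m * th d k)
          = wt d k * cos (th d k) ^ s * (cos (th d k) * cos (real m * th d k))"
        by (simp add: algebra_simps)
      also have "\<dots> = wt d k * cos (th d k) ^ s * ((cos (real (Suc m) * th d k) + cos (real m' * th d k)) / 2)"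
        by (simp only: c)
      also have "\<dots> = (wt d k * cos (th d k) ^ s * cos (real (Suc m) * th d k)
                       + wt d k * cos (th d k) ^ s * cos (real m' * th d k)) / 2"
        by (simp add: field_simps)
      finally show "wt d k * cos (th d k) ^ Suc s * cos (real m * th d k)
          = (wt d k * cos (th d k) ^ s * cos (real (Suc m) * th d k)
                       + wt d k * cos (th d k) ^ s * cos (real m' * th d k)) / 2" .
    qed
    also have "\<dots> = 1" using IH1 IH2 by (simp add: sum_divide_distrib[symmetric] sum.distrib)
    finally show ?thesis .
  qed
qed

lemma wt_pow: "s \<le> d \<Longrightarrow> (\<Sum>k<NN d. wt d k * cos (th d k) ^ s) = 1"
  using wt_cospow_cos[of s 0 d] by simp




lemma dirichlet: "2 * sin (t/2) * Dk d t = 2 * sin ((real d + 1/2) * t)"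
proof -
  define F where "F j = sin ((real j + 1/2) * t)" for j :: nat
  have step: "2 * sin (t/2) * cos (real (Suc j) * t) = F (Suc j) - F j" for j
  proof -
    have "F (Suc j) = sin (real (Suc j) * t + t/2)" unfolding F_def by (simp add: algebra_simps)
    moreover have "F j = sin (real (Suc j) * t - t/2)" unfolding F_def by (simp add: algebra_simps)
    ultimately show ?thesis by (simp add: sin_add sin_diff)
  qed
  have "2 * sin (t/2) * Dk d t = 2 * sin (t/2) + 2 * (\<Sum>j<d. 2 * sin (t/2) * cos (real (Suc j) * t))"
    unfolding Dk_def by (simp add: algebra_simps sum_distrib_left)
  also have "\<dots> = 2 * sin (t/2) + 2 * (F d - F 0)"
    unfolding step by (simp only: sum_lessThan_telescope)
  also have "\<dots> = 2 * sin ((real d + 1/2) * t)" unfolding F_def by simp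
  finally show ?thesis .
qed

lemma Dk_bound:
  assumes "sin (t/2) \<noteq> 0"
  shows "\<bar>Dk d t\<bar> \<le> 1 / \<bar>sin (t/2)\<bar>"
proof -
  have "\<bar>sin (t/2)\<bar> * \<bar>Dk d t\<bar> = \<bar>sin ((real d + 1/2) * t)\<bar>"
    using dirichlet[of t d] by (metis abs_mult mult_cancel_left2 mult.assoc zero_neq_numeral mult_left_cancel)
  also have "\<dots> \<le> 1" by simp
  finally have "\<bar>sin (t/2)\<bar> * \<bar>Dk d t\<bar> \<le> 1" .
  then show ?thesis using assms by (simp add: field_simps)
qed

lemma term_bound:
  fixes a N :: real
  assumes a: "1 \<le> a" "1 \<le> N - a"
  defines "\<psi> \<equiv> a * pi / (2 * N)"
  shows "sin \<psi> > 0" "cos \<psi> > 0"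
    "1 / (N * sin \<psi> * (2 * sin \<psi> * cos \<psi>)) \<le> 1 + N / (2 * a\<^sup>2)"
proof -
  have N: "N \<ge> 2" using a by simp
  have p0: "0 \<le> \<psi>" unfolding \<psi>_def using a N by simp
  have p1: "\<psi> \<le> pi / 2" unfolding \<psi>_def using a N pi_gt_zero by (simp add: field_simps)
  have s: "sin \<psi> \<ge> a / N"
  proof -
    have "2 * \<psi> / pi = a / N" unfolding \<psi>_def using N pi_gt_zero by (simp add: field_simps)
    then show ?thesis using sin_jordan[OF p0 p1] by simp
  qed
  have c: "cos \<psi> \<ge> (N - a) / N"
  proof -
    have "2 * (pi/2 - \<psi>) / pi = (N - a) / N" unfolding \<psi>_def using N pi_gt_zero by (simp add: field_simps)
    moreover have "cos \<psi> = sin (pi/2 - \<psi>)" by (simp add: sin_cos_eq)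
    ultimately show ?thesis using sin_jordan[of "pi/2 - \<psi>"] p0 p1 by simp
  qed
  have aN: "a / N > 0" using a N by simp
  have bN: "(N - a) / N > 0" using a N by simp
  show sp: "sin \<psi> > 0" using s aN by linarith
  show cp: "cos \<psi> > 0" using c bN by linarith
  have "N * (a / N) * (2 * (a / N) * ((N - a) / N)) \<le> N * sin \<psi> * (2 * sin \<psi> * cos \<psi>)"
  proof -
    have m1: "2 * (a / N) * ((N - a) / N) \<le> 2 * sin \<psi> * cos \<psi>"
      using s c aN bN by (intro mult_mono) auto
    have f3: "0 \<le> 2 * (a / N) * ((N - a) / N)" using aN bN by (intro mult_nonneg_nonneg) auto
    have f1: "N * (a / N) \<le> N * sin \<psi>" using s N by (intro mult_left_mono) auto
    have f2: "0 \<le> N * sin \<psi>" using s N aN by simp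
    show ?thesis by (rule mult_mono[OF f1 m1 f2 f3])
  qed
  moreover have "N * (a / N) * (2 * (a / N) * ((N - a) / N)) = 2 * a\<^sup>2 * (N - a) / N\<^sup>2"
    using N by (simp add: field_simps power2_eq_square)
  ultimately have D: "2 * a\<^sup>2 * (N - a) / N\<^sup>2 \<le> N * sin \<psi> * (2 * sin \<psi> * cos \<psi>)" by simp
  have Dp: "2 * a\<^sup>2 * (N - a) / N\<^sup>2 > 0" using a N by simp
  have "1 / (N * sin \<psi> * (2 * sin \<psi> * cos \<psi>)) \<le> 1 / (2 * a\<^sup>2 * (N - a) / N\<^sup>2)"
  proof -
    have Dq: "0 < N * sin \<psi> * (2 * sin \<psi> * cos \<psi>)" using Dp D by linarith
    show ?thesis
      apply (rule divide_left_mono[OF D])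
       apply simp
      apply (rule mult_pos_pos[OF Dq Dp])
      done
  qed
  also have "\<dots> = N\<^sup>2 / (2 * a\<^sup>2 * (N - a))" using N by simp
  also have "\<dots> \<le> 1 + N / (2 * a\<^sup>2)"
  proof -
    have "(a - 1) * (N - a - 1) \<ge> 0" using a by simp
    then have key: "N \<le> 2 * a * (N - a)" using a by (simp add: algebra_simps) 
    have pos: "2 * a\<^sup>2 * (N - a) > 0" using a by simp
    have "N\<^sup>2 \<le> (1 + N / (2 * a\<^sup>2)) * (2 * a\<^sup>2 * (N - a))"
    proof -
      have "(1 + N / (2 * a\<^sup>2)) * (2 * a\<^sup>2 * (N - a)) = 2 * a\<^sup>2 * (N - a) + N * (N - a)"
        using a by (simp add: field_simps)
      moreover have "N * a \<le> 2 * a\<^sup>2 * (N - a)"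
        using mult_left_mono[OF key, of a] a by (simp add: power2_eq_square algebra_simps)
      ultimately show ?thesis by (simp add: power2_eq_square algebra_simps)
    qed
    then show ?thesis using pos by (simp add: divide_le_eq)
  qed
  finally show "1 / (N * sin \<psi> * (2 * sin \<psi> * cos \<psi>)) \<le> 1 + N / (2 * a\<^sup>2)" .
qed




lemma gen_node:
  assumes "sin (t/2) = s" "\<bar>sin t\<bar> = 2 * s * c" "s > 0" "c > 0" "N > 0"
  shows "\<bar>Dk d t\<bar> / N * (\<bar>cos t\<bar> / \<bar>sin t\<bar>) \<le> 1 / (N * s * (2 * s * c))"
proof -
  have D: "\<bar>Dk d t\<bar> \<le> 1 / s" using Dk_bound[of t d] assms by simp
  have st: "\<bar>sin t\<bar> > 0" using assms by simp
  have c1: "\<bar>cos t\<bar> / \<bar>sin t\<bar> \<le> 1 / (2 * s * c)"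
    using assms(2) st abs_cos_le_one[of t] by (simp add: divide_right_mono)
  have "\<bar>Dk d t\<bar> / N * (\<bar>cos t\<bar> / \<bar>sin t\<bar>) \<le> (1 / s) / N * (1 / (2 * s * c))"
    using D c1 assms by (intro mult_mono divide_right_mono) auto
  also have "\<dots> = 1 / (N * s * (2 * s * c))" by (simp add: field_simps)
  finally show ?thesis .
qed

definition Kf :: "nat \<Rightarrow> nat \<Rightarrow> real" where
  "Kf d k = \<bar>cos (th d k)\<bar> / \<bar>sin (th d k)\<bar>"

lemma node_bound:
  assumes k: "k < NN d"
  shows "sin (th d k) \<noteq> 0"
    "\<bar>wt d k\<bar> * Kf d k \<le> 1 + real (NN d) / (2 * (2 * real k + 1)\<^sup>2)
         + real (NN d) / (2 * (2 * real (NN d) - 2 * real k - 1)\<^sup>2)"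
proof -
  define N where "N = real (NN d)"
  define a where "a = 2 * real k + 1"
  have N0: "N > 0" unfolding N_def NN_def by simp
  have th2: "th d k / 2 = a * pi / (2 * N)" unfolding th_def a_def N_def by simp
  have nn1: "0 \<le> N / (2 * (2 * real k + 1)\<^sup>2)" "0 \<le> N / (2 * (2 * N - 2 * real k - 1)\<^sup>2)"
    using N0 by simp_all
  have "sin (th d k) \<noteq> 0 \<and> \<bar>wt d k\<bar> * Kf d k \<le> 1 + N / (2 * (2 * real k + 1)\<^sup>2)
         + N / (2 * (2 * N - 2 * real k - 1)\<^sup>2)"
  proof (cases "2 * k + 1 < NN d")
    case True
    then have "2 * k + 2 \<le> NN d" by simp
    then have a1: "1 \<le> N - a" unfolding N_def a_def by linarith
    have a0: "1 \<le> a" unfolding a_def by simp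
    define \<psi> where "\<psi> = a * pi / (2 * N)"
    note tb = term_bound[OF a0 a1, folded \<psi>_def]
    have s: "sin (th d k / 2) = sin \<psi>" unfolding th2 \<psi>_def ..
    have thp: "th d k = 2 * \<psi>" using th2 unfolding \<psi>_def by simp
    have s2: "\<bar>sin (th d k)\<bar> = 2 * sin \<psi> * cos \<psi>" unfolding thp sin_double using tb by simp
    have "\<bar>wt d k\<bar> * Kf d k = \<bar>Dk d (th d k)\<bar> / N * (\<bar>cos (th d k)\<bar> / \<bar>sin (th d k)\<bar>)"
      unfolding wt_def Kf_def N_def by simp
    also have "\<dots> \<le> 1 / (N * sin \<psi> * (2 * sin \<psi> * cos \<psi>))"
      by (rule gen_node[OF s s2 tb(1) tb(2) N0])
    also have "\<dots> \<le> 1 + N / (2 * a\<^sup>2)" by (rule tb(3))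
    finally have "\<bar>wt d k\<bar> * Kf d k \<le> 1 + N / (2 * a\<^sup>2)" .
    moreover have "sin (th d k) \<noteq> 0" using s2 tb by auto
    ultimately show ?thesis using nn1 unfolding a_def by simp
  next
    case False
    then have "2 * k + 1 \<ge> NN d + 1" unfolding NN_def by presburger
    then have b1: "1 \<le> N - (2 * N - a)" unfolding N_def a_def by linarith
    have "k + 1 \<le> NN d" using k by simp
    then have b0: "1 \<le> 2 * N - a" unfolding N_def a_def by linarith
    define \<psi> where "\<psi> = (2 * N - a) * pi / (2 * N)"
    note tb = term_bound[OF b0 b1, folded \<psi>_def]
    have ps: "th d k / 2 = pi - \<psi>" unfolding th2 \<psi>_def using N0 by (simp add: field_simps)
    have s: "sin (th d k / 2) = sin \<psi>" unfolding ps by simp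
    have c: "cos (th d k / 2) = - cos \<psi>" unfolding ps by simp
    have "sin (th d k) = sin (2 * (th d k / 2))" by simp
    also have "\<dots> = - (2 * sin \<psi> * cos \<psi>)" unfolding sin_double s c by simp
    finally have s2: "\<bar>sin (th d k)\<bar> = 2 * sin \<psi> * cos \<psi>" using tb by simp
    have "\<bar>wt d k\<bar> * Kf d k = \<bar>Dk d (th d k)\<bar> / N * (\<bar>cos (th d k)\<bar> / \<bar>sin (th d k)\<bar>)"
      unfolding wt_def Kf_def N_def by simp
    also have "\<dots> \<le> 1 / (N * sin \<psi> * (2 * sin \<psi> * cos \<psi>))"
      by (rule gen_node[OF s s2 tb(1) tb(2) N0])
    also have "\<dots> \<le> 1 + N / (2 * (2 * N - a)\<^sup>2)" by (rule tb(3))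
    finally have "\<bar>wt d k\<bar> * Kf d k \<le> 1 + N / (2 * (2 * N - a)\<^sup>2)" .
    moreover have "sin (th d k) \<noteq> 0" using s2 tb by auto
    moreover have "2 * N - a = 2 * N - 2 * real k - 1" unfolding a_def by simp
    ultimately show ?thesis using nn1 by simp
  qed
  then show "sin (th d k) \<noteq> 0"
    "\<bar>wt d k\<bar> * Kf d k \<le> 1 + real (NN d) / (2 * (2 * real k + 1)\<^sup>2)
         + real (NN d) / (2 * (2 * real (NN d) - 2 * real k - 1)\<^sup>2)"
    unfolding N_def by auto
qed

lemma inv_sq_sum: "m \<ge> 1 \<Longrightarrow> (\<Sum>k<m. 1 / (real k + 1)\<^sup>2) \<le> 2 - 1 / real m"
proof (induction m rule: nat_induct_at_least)
  case base then show ?case by simp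
next
  case (Suc m)
  have "(\<Sum>k<Suc m. 1 / (real k + 1)\<^sup>2) = (\<Sum>k<m. 1 / (real k + 1)\<^sup>2) + 1 / (real m + 1)\<^sup>2" by simp
  also have "\<dots> \<le> 2 - 1 / real m + 1 / (real m + 1)\<^sup>2" using Suc by simp
  also have "\<dots> \<le> 2 - 1 / real (Suc m)"
  proof -
    have m: "real m \<ge> 1" using Suc by simp
    have e: "1 / real m - 1 / (real m + 1) = 1 / (real m * (real m + 1))" using m by (simp add: field_simps)
    have le: "real m * (real m + 1) \<le> (real m + 1) * (real m + 1)" by (rule mult_right_mono) auto
    have "1 / (real m + 1)\<^sup>2 \<le> 1 / (real m * (real m + 1))"
      unfolding power2_eq_square by (rule frac_le) (use m le in auto)
    then have "1 / (real m + 1)\<^sup>2 \<le> 1 / real m - 1 / (real m + 1)" using e by simp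
    moreover have "1 / real (Suc m) = 1 / (real m + 1)" by (simp add: add.commute)
    ultimately show ?thesis by linarith
  qed
  finally show ?case .
qed

lemma odd_sq_sum: "(\<Sum>k<m. 1 / (2 * real k + 1)\<^sup>2) \<le> 2"
proof (cases "m = 0")
  case True then show ?thesis by simp
next
  case False
  have "(\<Sum>k<m. 1 / (2 * real k + 1)\<^sup>2) \<le> (\<Sum>k<m. 1 / (real k + 1)\<^sup>2)"
    by (intro sum_mono divide_left_mono power_mono) auto
  also have "\<dots> \<le> 2 - 1 / real m" using inv_sq_sum[of m] False by simp
  also have "\<dots> \<le> 2" by simp
  finally show ?thesis .
qed

lemma W_bound:
  assumes "d \<ge> 1"
  shows "(\<Sum>k<NN d. \<bar>wt d k\<bar> * Kf d k) \<le> 12 * real d"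
proof -
  define M where "M = NN d"
  define N where "N = real M"
  have "(\<Sum>k<M. \<bar>wt d k\<bar> * Kf d k) \<le> (\<Sum>k<M. 1 + N / (2 * (2 * real k + 1)\<^sup>2)
         + N / (2 * (2 * N - 2 * real k - 1)\<^sup>2))"
    unfolding M_def N_def by (intro sum_mono node_bound) auto
  also have "\<dots> = real M + N / 2 * (\<Sum>k<M. 1 / (2 * real k + 1)\<^sup>2)
         + N / 2 * (\<Sum>k<M. 1 / (2 * N - 2 * real k - 1)\<^sup>2)"
    by (simp add: sum.distrib sum_distrib_left)
  also have "(\<Sum>k<M. 1 / (2 * N - 2 * real k - 1)\<^sup>2) = (\<Sum>k<M. 1 / (2 * real (M - Suc k) + 1)\<^sup>2)"
    by (intro sum.cong refl) (auto simp: N_def of_nat_diff)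
  also have "\<dots> = (\<Sum>k<M. 1 / (2 * real k + 1)\<^sup>2)"
    by (rule sum.nat_diff_reindex)
  finally have "(\<Sum>k<M. \<bar>wt d k\<bar> * Kf d k) \<le> N + N * (\<Sum>k<M. 1 / (2 * real k + 1)\<^sup>2)"
    unfolding N_def by simp
  also have "\<dots> \<le> N + N * 2" using odd_sq_sum[of M] unfolding N_def by (intro add_left_mono mult_left_mono) auto
  also have "\<dots> \<le> 12 * real d" unfolding N_def M_def NN_def using assms by simp
  finally show ?thesis unfolding M_def .
qed




lemma convex_powr_nonneg:
  assumes p: "p \<ge> 1"
  shows "convex_on {0..} (\<lambda>x::real. x powr p)"
proof (rule convex_on_linorderI)
  show "convex {0::real..}" by simp
  fix t x y :: real assume t: "0 < t" "t < 1" and xy: "x \<in> {0..}" "y \<in> {0..}" "x < y"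
  show "((1 - t) *\<^sub>R x + t *\<^sub>R y) powr p \<le> (1 - t) * x powr p + t * y powr p"
  proof (cases "x = 0")
    case True
    have "t powr p \<le> t powr 1" using t p by (intro powr_mono') auto
    then have tp: "t powr p \<le> t" using t by simp
    have "((1 - t) *\<^sub>R x + t *\<^sub>R y) powr p = t powr p * y powr p"
      using True by (simp add: powr_mult)
    also have "\<dots> \<le> t * y powr p" using tp by (intro mult_right_mono) auto
    finally show ?thesis using True p by simp
  next
    case False
    then have "x \<in> {0<..}" "y \<in> {0<..}" using xy by auto
    then show ?thesis using convex_onD[OF powr_convex[OF p], of t x y] t by simp
  qed
qed

lemma jensen_powr:
  fixes c y :: "'a \<Rightarrow> real"
  assumes K: "finite K" and c: "\<And>k. k \<in> K \<Longrightarrow> c k \<ge> 0" and y: "\<And>k. k \<in> K \<Longrightarrow> y k \<ge> 0"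
    and p: "p \<ge> 1"
  shows "(\<Sum>k\<in>K. c k * y k) powr p \<le> (\<Sum>k\<in>K. c k) powr (p - 1) * (\<Sum>k\<in>K. c k * y k powr p)"
proof -
  define W where "W = (\<Sum>k\<in>K. c k)"
  have W0: "W \<ge> 0" unfolding W_def using c by (simp add: sum_nonneg)
  show ?thesis
  proof (cases "W = 0")
    case True
    then have "\<forall>k\<in>K. c k = 0" unfolding W_def using sum_nonneg_eq_0_iff[OF K] c by blast
    then have "(\<Sum>k\<in>K. c k * y k) = 0" by simp
    then show ?thesis using p by (simp add: W_def[symmetric] True)
  next
    case False
    then have Wp: "W > 0" using W0 by simp
    then have Kne: "K \<noteq> {}" unfolding W_def by auto
    have a1: "(\<Sum>k\<in>K. c k / W) = 1" using Wp unfolding W_def by (simp add: sum_divide_distrib[symmetric])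
    have J: "(\<Sum>k\<in>K. (c k / W) *\<^sub>R y k) powr p \<le> (\<Sum>k\<in>K. (c k / W) * y k powr p)"
      by (rule convex_on_sum[OF K Kne convex_powr_nonneg[OF p] a1]) (use c y Wp in auto)
    have e1: "(\<Sum>k\<in>K. c k * y k) = W * (\<Sum>k\<in>K. (c k / W) *\<^sub>R y k)"
      using Wp by (simp add: sum_distrib_left)
    have "(\<Sum>k\<in>K. c k * y k) powr p = W powr p * (\<Sum>k\<in>K. (c k / W) *\<^sub>R y k) powr p"
      unfolding e1 by (simp add: powr_mult)
    also have "\<dots> \<le> W powr p * (\<Sum>k\<in>K. (c k / W) * y k powr p)"
      using J by (intro mult_left_mono) auto
    also have "\<dots> = (W powr p / W) * (\<Sum>k\<in>K. c k * y k powr p)"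
      using Wp by (simp add: sum_distrib_left sum_divide_distrib)
    also have "W powr p / W = W powr (p - 1)"
      using Wp by (simp add: powr_diff)
    finally show ?thesis unfolding W_def .
  qed
qed

lemma L2_sum_triangle:
  assumes "finite K"
  shows "L2_set (\<lambda>j. \<Sum>k\<in>K. u k j) A \<le> (\<Sum>k\<in>K. L2_set (u k) A)"
  using assms
proof (induction K rule: finite_induct)
  case empty then show ?case by (simp add: L2_set_0')
next
  case (insert k K)
  have "L2_set (\<lambda>j. \<Sum>k\<in>insert k K. u k j) A = L2_set (\<lambda>j. u k j + (\<Sum>k\<in>K. u k j)) A"
    using insert by simp
  also have "\<dots> \<le> L2_set (u k) A + L2_set (\<lambda>j. \<Sum>k\<in>K. u k j) A"
    by (rule L2_set_triangle_ineq)
  also have "\<dots> \<le> L2_set (u k) A + (\<Sum>k\<in>K. L2_set (u k) A)"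
    using insert by simp
  finally show ?case using insert by simp
qed

lemma L2_scale: "L2_set (\<lambda>j. w * v j) A = \<bar>w\<bar> * L2_set v A"
  unfolding L2_set_def
  by (simp add: power_mult_distrib sum_distrib_left[symmetric] real_sqrt_mult)




lemma flip_cube: "x \<in> cube n \<Longrightarrow> j < n \<Longrightarrow> flip j x \<in> cube n"
  unfolding cube_def flip_def by auto

lemma sq_powr: "(x\<^sup>2) powr (p/2) = \<bar>x\<bar> powr p" for x p :: real
proof (cases "x = 0")
  case True then show ?thesis by simp
next
  case False
  have e: "x\<^sup>2 = \<bar>x\<bar> powr 2" using False by (simp add: powr_realpow)
  have "(x\<^sup>2) powr (p/2) = (\<bar>x\<bar> powr 2) powr (p/2)" unfolding e ..
  also have "\<dots> = \<bar>x\<bar> powr (2 * (p/2))" by (rule powr_powr)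
  finally show ?thesis by simp
qed

lemma pw_avg:
  "(\<Sum>x\<in>cube n. \<Sum>\<xi>\<in>cube n. pw n r x \<xi> * F \<xi>) = (\<Sum>\<xi>\<in>cube n. F \<xi>)"
proof -
  have "(\<Sum>x\<in>cube n. \<Sum>\<xi>\<in>cube n. pw n r x \<xi> * F \<xi>) = (\<Sum>\<xi>\<in>cube n. \<Sum>x\<in>cube n. pw n r \<xi> x * F \<xi>)"
    by (subst sum.swap) (simp add: pw_sym)
  also have "\<dots> = (\<Sum>\<xi>\<in>cube n. F \<xi>)"
    by (simp add: sum_distrib_right[symmetric] pw_sum1)
  finally show ?thesis .
qed

lemma jensen_pw:
  assumes p: "p \<ge> 2" and r: "\<bar>r\<bar> \<le> 1" and x: "x \<in> cube n"
  shows "sqrt (\<Sum>\<xi>\<in>cube n. pw n r x \<xi> * (g \<xi>)\<^sup>2) powr p \<le> (\<Sum>\<xi>\<in>cube n. pw n r x \<xi> * \<bar>g \<xi>\<bar> powr p)"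
proof -
  have G0: "(\<Sum>\<xi>\<in>cube n. pw n r x \<xi> * (g \<xi>)\<^sup>2) \<ge> 0"
    using pw_nonneg[OF r x] by (intro sum_nonneg) simp
  have "sqrt (\<Sum>\<xi>\<in>cube n. pw n r x \<xi> * (g \<xi>)\<^sup>2) powr p = (\<Sum>\<xi>\<in>cube n. pw n r x \<xi> * (g \<xi>)\<^sup>2) powr (p/2)"
    using G0 by (simp add: powr_half_sqrt[symmetric] powr_powr)
  also have "\<dots> \<le> (\<Sum>\<xi>\<in>cube n. pw n r x \<xi> * ((g \<xi>)\<^sup>2) powr (p/2))"
    using convex_on_sum[OF finite_cube cube_ne convex_powr_nonneg[of "p/2"] pw_sum1[of n r x], of "\<lambda>\<xi>. (g \<xi>)\<^sup>2"]
      p pw_nonneg[OF r x] by simp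
  also have "\<dots> = (\<Sum>\<xi>\<in>cube n. pw n r x \<xi> * \<bar>g \<xi>\<bar> powr p)"
    by (simp add: sq_powr)
  finally show ?thesis .
qed

lemma main_bound:
  assumes p: "p \<ge> 2" and deg: "degree_le n d f"
  shows "Lp_norm n p (grad_norm n f) \<le> 12 * real d * Lp_norm n p f"
proof -
  define I where "I = {S. S \<subseteq> {..<n} \<and> card S \<le> d}"
  obtain c where fc: "\<forall>x\<in>cube n. f x = (\<Sum>S\<in>I. c S * walsh S x)"
    using deg unfolding degree_le_def I_def by blast
  have finI: "finite I" unfolding I_def by (rule finite_subset[of _ "Pow {..<n}"]) auto
  have Isub: "\<And>S. S \<in> I \<Longrightarrow> S \<subseteq> {..<n}" unfolding I_def by blast
  have finS: "\<And>S. S \<in> I \<Longrightarrow> finite S" using Isub finite_subset by blast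
  define g where "g x = (\<Sum>S\<in>I. c S * walsh S x)" for x
  have fg: "\<And>x. x \<in> cube n \<Longrightarrow> f x = g x" using fc unfolding g_def by blast
  have gradfg: "grad_norm n f x = grad_norm n g x" if x: "x \<in> cube n" for x
    unfolding grad_norm_def Dj_def
    by (intro arg_cong[where f = sqrt] sum.cong refl) (simp add: fg x flip_cube)
  have Lpf: "Lp_norm n p f = Lp_norm n p g"
    unfolding Lp_norm_def cexp_def by (simp add: fg cong: sum.cong)
  have Lpgrad: "Lp_norm n p (grad_norm n f) = Lp_norm n p (grad_norm n g)"
    unfolding Lp_norm_def cexp_def by (simp add: gradfg cong: sum.cong)
  have Djg: "Dj j g x = (\<Sum>S\<in>I. if j \<in> S then c S * walsh S x else 0)" for j x
    unfolding g_def using Dj_poly[OF finI finS, of j c x] by simp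
  have gn0: "grad_norm n h x \<ge> 0" for h x unfolding grad_norm_def by (simp add: sum_nonneg)
  have Lpg0: "Lp_norm n p g \<ge> 0" unfolding Lp_norm_def by simp
  show ?thesis
  proof (cases "d = 0")
    case True
    have "S = {}" if S: "S \<in> I" for S
    proof -
      have "card S \<le> 0" using S True unfolding I_def by simp
      then show "S = {}" using finS[OF S] by simp
    qed
    then have "Dj j g x = 0" for j x unfolding Djg by (intro sum.neutral) auto
    then have "grad_norm n g = (\<lambda>x. 0)" unfolding grad_norm_def by (simp add: fun_eq_iff)
    then have "Lp_norm n p (grad_norm n g) = 0" unfolding Lp_norm_def cexp_def using p by simp
    then show ?thesis unfolding Lpgrad Lpf using True by simp
  next
    case False
    then have d1: "d \<ge> 1" by simp
    define M where "M = NN d"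
    define r where "r k = cos (th d k)" for k
    define cK where "cK k = \<bar>wt d k\<bar> * Kf d k" for k
    define W where "W = (\<Sum>k<M. cK k)"
    define G where "G k x = (\<Sum>\<xi>\<in>cube n. pw n (r k) x \<xi> * (g \<xi>)\<^sup>2)" for k x
    define h where "h k y = (\<Sum>S\<in>I. c S * r k ^ card S * walsh S y)" for k y
    have cK0: "cK k \<ge> 0" for k unfolding cK_def Kf_def by simp
    have W0: "W \<ge> 0" unfolding W_def using cK0 by (simp add: sum_nonneg)
    have Wb: "W \<le> 12 * real d" unfolding W_def cK_def M_def using W_bound[OF d1] .
    have sin0: "sin (th d k) \<noteq> 0" if "k < M" for k using node_bound(1) that unfolding M_def by blast
    have r1: "\<bar>r k\<bar> < 1" if k: "k < M" for k
    proof -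
      have "(r k)\<^sup>2 = 1 - (sin (th d k))\<^sup>2" unfolding r_def by (simp add: cos_squared_eq)
      moreover have "(sin (th d k))\<^sup>2 > 0" using sin0[OF k] by simp
      ultimately have "(r k)\<^sup>2 < 1" by simp
      then show ?thesis using abs_square_less_1 by blast
    qed
    have Djh: "Dj j (h k) x = (\<Sum>S\<in>I. if j \<in> S then c S * r k ^ card S * walsh S x else 0)" for j k x
      unfolding h_def using Dj_poly[OF finI finS, of j "\<lambda>S. c S * r k ^ card S" x] by simp
    have interp: "Dj j g x = (\<Sum>k<M. wt d k * Dj j (h k) x)" for j x
    proof -
      have "(\<Sum>k<M. wt d k * Dj j (h k) x)
          = (\<Sum>k<M. \<Sum>S\<in>I. if j \<in> S then c S * walsh S x * (wt d k * r k ^ card S) else 0)"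
        unfolding Djh sum_distrib_left by (intro sum.cong refl) (simp add: mult_ac)
      also have "\<dots> = (\<Sum>S\<in>I. \<Sum>k<M. if j \<in> S then c S * walsh S x * (wt d k * r k ^ card S) else 0)"
        by (rule sum.swap)
      also have "\<dots> = (\<Sum>S\<in>I. if j \<in> S then c S * walsh S x * (\<Sum>k<M. wt d k * r k ^ card S) else 0)"
        by (intro sum.cong refl) (simp add: sum_distrib_left)
      also have "\<dots> = (\<Sum>S\<in>I. if j \<in> S then c S * walsh S x else 0)"
      proof (intro sum.cong refl)
        fix S assume "S \<in> I"
        then have "card S \<le> d" unfolding I_def by blast
        then have "(\<Sum>k<M. wt d k * r k ^ card S) = 1" unfolding M_def r_def using wt_pow by blast
        then show "(if j \<in> S then c S * walsh S x * (\<Sum>k<M. wt d k * r k ^ card S) else 0)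
                 = (if j \<in> S then c S * walsh S x else 0)" by simp
      qed
      finally show ?thesis unfolding Djg by simp
    qed
    have gradh: "grad_norm n (h k) x \<le> Kf d k * sqrt (G k x)" if k: "k < M" and x: "x \<in> cube n" for k x
    proof -
      have ke: "(1 - (r k)\<^sup>2) * (\<Sum>j<n. (Dj j (h k) x)\<^sup>2) \<le> (r k)\<^sup>2 * G k x"
        unfolding h_def G_def g_def using key_est[OF r1[OF k] x finI Isub, of c] by simp
      have s2: "1 - (r k)\<^sup>2 = (sin (th d k))\<^sup>2" unfolding r_def by (simp add: sin_squared_eq)
      have sp: "(sin (th d k))\<^sup>2 > 0" using sin0[OF k] by simp
      have "(\<Sum>j<n. (Dj j (h k) x)\<^sup>2) \<le> (r k)\<^sup>2 * G k x / (sin (th d k))\<^sup>2"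
        using ke sp unfolding s2 by (simp add: le_divide_eq mult.commute)
      also have "\<dots> = (Kf d k)\<^sup>2 * G k x"
        unfolding Kf_def r_def by (simp add: power_divide)
      finally have "sqrt (\<Sum>j<n. (Dj j (h k) x)\<^sup>2) \<le> sqrt ((Kf d k)\<^sup>2 * G k x)"
        by (rule real_sqrt_le_mono)
      also have "\<dots> = Kf d k * sqrt (G k x)"
        unfolding Kf_def by (simp add: real_sqrt_mult)
      finally show ?thesis unfolding grad_norm_def .
    qed
    have G0: "G k x \<ge> 0" if "k < M" "x \<in> cube n" for k x
    proof -
      have "\<bar>r k\<bar> \<le> 1" using r1[OF that(1)] by simp
      then show ?thesis unfolding G_def using pw_nonneg[of "r k" x n] that by (intro sum_nonneg) simp
    qed
    have gradg: "grad_norm n g x \<le> (\<Sum>k<M. cK k * sqrt (G k x))" if x: "x \<in> cube n" for x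
    proof -
      have "grad_norm n g x = L2_set (\<lambda>j. \<Sum>k<M. wt d k * Dj j (h k) x) {..<n}"
        unfolding grad_norm_def L2_set_def interp ..
      also have "\<dots> \<le> (\<Sum>k<M. L2_set (\<lambda>j. wt d k * Dj j (h k) x) {..<n})"
        by (rule L2_sum_triangle) simp
      also have "\<dots> = (\<Sum>k<M. \<bar>wt d k\<bar> * grad_norm n (h k) x)"
        unfolding L2_scale grad_norm_def L2_set_def ..
      also have "\<dots> \<le> (\<Sum>k<M. \<bar>wt d k\<bar> * (Kf d k * sqrt (G k x)))"
        using gradh x by (intro sum_mono mult_left_mono) auto
      also have "\<dots> = (\<Sum>k<M. cK k * sqrt (G k x))" unfolding cK_def by (simp add: mult_ac)
      finally show ?thesis .
    qed
    have pt: "\<bar>grad_norm n g x\<bar> powr p \<le> W powr (p - 1) * (\<Sum>k<M. cK k * (\<Sum>\<xi>\<in>cube n. pw n (r k) x \<xi> * \<bar>g \<xi>\<bar> powr p))"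
      if x: "x \<in> cube n" for x
    proof -
      have "\<bar>grad_norm n g x\<bar> powr p \<le> (\<Sum>k<M. cK k * sqrt (G k x)) powr p"
        using gradg[OF x] gn0 p by (intro powr_mono2) auto
      also have "\<dots> \<le> W powr (p - 1) * (\<Sum>k<M. cK k * sqrt (G k x) powr p)"
        unfolding W_def by (rule jensen_powr) (use cK0 p G0 x in auto)
      also have "\<dots> \<le> W powr (p - 1) * (\<Sum>k<M. cK k * (\<Sum>\<xi>\<in>cube n. pw n (r k) x \<xi> * \<bar>g \<xi>\<bar> powr p))"
      proof (rule mult_left_mono, rule sum_mono)
        fix k assume k: "k \<in> {..<M}"
        have "sqrt (G k x) powr p \<le> (\<Sum>\<xi>\<in>cube n. pw n (r k) x \<xi> * \<bar>g \<xi>\<bar> powr p)"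
          unfolding G_def by (rule jensen_pw[OF p _ x]) (use r1[of k] k in auto)
        then show "cK k * sqrt (G k x) powr p \<le> cK k * (\<Sum>\<xi>\<in>cube n. pw n (r k) x \<xi> * \<bar>g \<xi>\<bar> powr p)"
          using cK0 by (intro mult_left_mono) auto
      qed simp
      finally show ?thesis .
    qed
    have "(\<Sum>x\<in>cube n. \<bar>grad_norm n g x\<bar> powr p)
        \<le> (\<Sum>x\<in>cube n. W powr (p - 1) * (\<Sum>k<M. cK k * (\<Sum>\<xi>\<in>cube n. pw n (r k) x \<xi> * \<bar>g \<xi>\<bar> powr p)))"
      by (rule sum_mono) (rule pt)
    also have "\<dots> = W powr (p - 1) * (\<Sum>k<M. cK k * (\<Sum>x\<in>cube n. \<Sum>\<xi>\<in>cube n. pw n (r k) x \<xi> * \<bar>g \<xi>\<bar> powr p))"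
    proof -
      have "(\<Sum>x\<in>cube n. \<Sum>k<M. cK k * (\<Sum>\<xi>\<in>cube n. pw n (r k) x \<xi> * \<bar>g \<xi>\<bar> powr p))
          = (\<Sum>k<M. \<Sum>x\<in>cube n. cK k * (\<Sum>\<xi>\<in>cube n. pw n (r k) x \<xi> * \<bar>g \<xi>\<bar> powr p))"
        by (rule sum.swap)
      also have "\<dots> = (\<Sum>k<M. cK k * (\<Sum>x\<in>cube n. \<Sum>\<xi>\<in>cube n. pw n (r k) x \<xi> * \<bar>g \<xi>\<bar> powr p))"
        by (simp add: sum_distrib_left)
      finally show ?thesis by (simp add: sum_distrib_left[symmetric])
    qed
    also have "\<dots> = W powr (p - 1) * W * (\<Sum>\<xi>\<in>cube n. \<bar>g \<xi>\<bar> powr p)"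
      unfolding pw_avg W_def by (simp add: sum_distrib_right)
    also have "W powr (p - 1) * W = W powr p"
    proof (cases "W = 0")
      case True then show ?thesis by simp
    next
      case False
      show ?thesis using powr_add[of W "p - 1" 1] W0 by simp
    qed
    finally have S: "(\<Sum>x\<in>cube n. \<bar>grad_norm n g x\<bar> powr p) \<le> W powr p * (\<Sum>\<xi>\<in>cube n. \<bar>g \<xi>\<bar> powr p)" .
    have "Lp_norm n p (grad_norm n g) = ((\<Sum>x\<in>cube n. \<bar>grad_norm n g x\<bar> powr p) / 2 ^ n) powr (1 / p)"
      unfolding Lp_norm_def cexp_def ..
    also have "\<dots> \<le> (W powr p * ((\<Sum>\<xi>\<in>cube n. \<bar>g \<xi>\<bar> powr p) / 2 ^ n)) powr (1 / p)"
      using S p by (intro powr_mono2) (auto intro!: divide_nonneg_pos sum_nonneg divide_right_mono)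
    also have "\<dots> = (W powr p) powr (1 / p) * ((\<Sum>\<xi>\<in>cube n. \<bar>g \<xi>\<bar> powr p) / 2 ^ n) powr (1 / p)"
      by (rule powr_mult)
    also have "(W powr p) powr (1 / p) = W" using W0 p by (simp add: powr_powr)
    also have "((\<Sum>\<xi>\<in>cube n. \<bar>g \<xi>\<bar> powr p) / 2 ^ n) powr (1 / p) = Lp_norm n p g"
      unfolding Lp_norm_def cexp_def ..
    also have "W * Lp_norm n p g \<le> 12 * real d * Lp_norm n p g"
      using Wb Lpg0 by (intro mult_right_mono) auto
    finally show ?thesis unfolding Lpgrad Lpf .
  qed
qed

theorem mainTheorem7:
  fixes p :: real
  assumes "p \<ge> 2"
  shows "\<exists>C::real. \<forall>(n::nat) (d::nat) (f::(nat \<Rightarrow> real) \<Rightarrow> real).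
           degree_le n d f \<longrightarrow> Lp_norm n p (grad_norm n f) \<le> C * real d * Lp_norm n p f"
  using main_bound[OF assms] by blast


end
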